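(* Let $\mathcal{G}=(G,\odot,\leq)$ be a real continuous Alo-group with $G$ an open interval of $\mathbb{R}$ and identity $e$. For all $\tilde a=[a^-,a^+],\tilde b\in[G]$: (1) $\|\tilde a\|_{[\mathcal{G}]}=\|\tilde a^{(-1)}\|_{[\mathcal{G}]}$; (2) $a^-\leq\|\tilde a\|_{[\mathcal{G}]}$ and $a^+\leq\|\tilde a\|_{[\mathcal{G}]}$; (3) $\|\tilde a\|_{[\mathcal{G}]}\geq e$; (4) $\|\tilde a\|_{[\mathcal{G}]}=e\iff a^-=a^+=e$; (5) $\|\tilde a\odot_{[G]}\tilde b\|_{[\mathcal{G}]}\leq\|\tilde a\|_{[\mathcal{G}]}\odot\|\tilde b\|_{[\mathcal{G}]}$.
   Context: An Alo-group $(G,\odot,\leq)$ is an Abelian group with a weak order $\leq$ such that $a\leq b\Rightarrow a\odot c\leq b\odot c$; real means $G\subseteq\mathbb{R}$ with the usual order, continuous means $\odot$ is continuous. $a^{(-1)}$ is the inverse of $a$. The $\mathcal{G}$-norm is $\|a\|_{\mathcal{G}}=\max\{a,a^{(-1)}\}$. $[G]=\{[a^-,a^+]: a^-,a^+\in G,\ a^-\leq a^+\}$. The reciprocal interval is $\tilde a^{(-1)}=[(a^+)^{(-1)},(a^-)^{(-1)}]$, and $\tilde a\odot_{[G]}\tilde b=\{a\odot b: a\in\tilde a, b\in\tilde b\}$. The $[\mathcal{G}]$-norm is $\|\tilde a\|_{[\mathcal{G}]}=\max\{\|a^-\|_{\mathcal{G}},\|a^+\|_{\mathcal{G}}\}\in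 G$. *)

theory Defs
  imports "HOL-Analysis.Analysis"
begin

definition real_alo_group :: "real set \<Rightarrow> (real \<Rightarrow> real \<Rightarrow> real) \<Rightarrow> bool" where
  "real_alo_group G op \<longleftrightarrow>
     (\<forall>a\<in>G. \<forall>b\<in>G. op a b \<in> G) \<and>
     (\<forall>a\<in>G. \<forall>b\<in>G. \<forall>c\<in>G. op (op a b) c = op a (op b c)) \<and>
     (\<forall>a\<in>G. \<forall>b\<in>G. op a b = op b a) \<and>
     (\<exists>e\<in>G. (\<forall>a\<in>G. op e a = a) \<and> (\<forall>a\<in>G. \<exists>b\<in>G. op a b = e)) \<and>
     (\<forall>a\<in>G. \<forall>b\<in>G. \<forall>c\<in>G. a \<le> b \<longrightarrow> op a c \<le> op b c)"

definition alo_id :: "real set \<Rightarrow> (real \<Rightarrow> real \<Rightarrow> real) \<Rightarrow> real" where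
  "alo_id G op = (THE e. e \<in> G \<and> (\<forall>a\<in>G. op e a = a))"

definition alo_inv :: "real set \<Rightarrow> (real \<Rightarrow> real \<Rightarrow> real) \<Rightarrow> real \<Rightarrow> real" where
  "alo_inv G op a = (THE b. b \<in> G \<and> op a b = alo_id G op)"

definition gnorm :: "real set \<Rightarrow> (real \<Rightarrow> real \<Rightarrow> real) \<Rightarrow> real \<Rightarrow> real" where
  "gnorm G op a = max a (alo_inv G op a)"

text \<open>Intervals [a^-,a^+] are represented as the sets {a^-..a^+}; the [G]-norm is
max of the G-norms of the endpoints (lower endpoint = Inf, upper endpoint = Sup).\<close>
definition ivnorm :: "real set \<Rightarrow> (real \<Rightarrow> real \<Rightarrow> real) \<Rightarrow> real set \<Rightarrow> real" where
  "ivnorm G op A = max (gnorm G op (Inf A)) (gnorm G op (Sup A))"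

definition iv_inv :: "real set \<Rightarrow> (real \<Rightarrow> real \<Rightarrow> real) \<Rightarrow> real \<Rightarrow> real \<Rightarrow> real set" where
  "iv_inv G op lo hi = {alo_inv G op hi .. alo_inv G op lo}"

definition iv_mult :: "(real \<Rightarrow> real \<Rightarrow> real) \<Rightarrow> real set \<Rightarrow> real set \<Rightarrow> real set" where
  "iv_mult op A B = {op a b | a b. a \<in> A \<and> b \<in> B}"

end

theory Submission
  imports Defs
begin

locale ralo =
  fixes G :: "real set" and op :: "real \<Rightarrow> real \<Rightarrow> real"
  assumes alo: "real_alo_group G op"
begin

lemma cl: "a \<in> G \<Longrightarrow> b \<in> G \<Longrightarrow> op a b \<in> G"
  using alo unfolding real_alo_group_def by blast
lemma assoc: "a \<in> G \<Longrightarrow> b \<in> G \<Longrightarrow> c \<in> G \<Longrightarrow> op (op a b) c = op a (op b c)"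
  using alo unfolding real_alo_group_def by blast
lemma comm: "a \<in> G \<Longrightarrow> b \<in> G \<Longrightarrow> op a b = op b a"
  using alo unfolding real_alo_group_def by blast
lemma mono1: "a \<in> G \<Longrightarrow> b \<in> G \<Longrightarrow> c \<in> G \<Longrightarrow> a \<le> b \<Longrightarrow> op a c \<le> op b c"
  using alo unfolding real_alo_group_def by blast
lemma mono2: "a \<in> G \<Longrightarrow> b \<in> G \<Longrightarrow> c \<in> G \<Longrightarrow> a \<le> b \<Longrightarrow> op c a \<le> op c b"
  using mono1 comm by metis

lemma ex_e: "\<exists>ee\<in>G. (\<forall>a\<in>G. op ee a = a) \<and> (\<forall>a\<in>G. \<exists>b\<in>G. op a b = ee)"
  using alo unfolding real_alo_group_def by blast

lemma id_props: "alo_id G op \<in> G \<and> (\<forall>a\<in>G. op (alo_id G op) a = a) \<and> (\<forall>a\<in>G. \<exists>b\<in>G. op a b = alo_id G op)"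
proof -
  obtain ee where ee: "ee \<in> G" "\<forall>a\<in>G. op ee a = a" "\<forall>a\<in>G. \<exists>b\<in>G. op a b = ee"
    using ex_e by blast
  have "alo_id G op = ee" unfolding alo_id_def
  proof (rule the_equality)
    fix ee' assume h: "ee' \<in> G \<and> (\<forall>a\<in>G. op ee' a = a)"
    then have "op ee' ee = ee" using ee by blast
    moreover have "op ee ee' = ee'" using ee h by blast
    ultimately show "ee' = ee" using comm ee h by metis
  qed (use ee in auto)
  then show ?thesis using ee by simp
qed

abbreviation "ee \<equiv> alo_id G op"
abbreviation "ginv \<equiv> alo_inv G op"

lemma eG: "ee \<in> G" using id_props by blast
lemma lid: "a \<in> G \<Longrightarrow> op ee a = a" using id_props by blast
lemma rid: "a \<in> G \<Longrightarrow> op a ee = a" using lid comm eG by metis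

lemma inv_props: assumes "a \<in> G" shows "ginv a \<in> G \<and> op a (ginv a) = ee"
proof -
  obtain b where b: "b \<in> G" "op a b = ee" using id_props assms by blast
  have "ginv a = b" unfolding alo_inv_def
  proof (rule the_equality)
    fix b' assume h: "b' \<in> G \<and> op a b' = ee"
    have "b' = op (op b a) b'" using h b assms lid comm by metis
    also have "\<dots> = op b (op a b')" using assoc h b assms by metis
    also have "\<dots> = b" using h b rid by simp
    finally show "b' = b" .
  qed (use b in auto)
  then show ?thesis using b by simp
qed

lemma inv_uniq: "a \<in> G \<Longrightarrow> b \<in> G \<Longrightarrow> op a b = ee \<Longrightarrow> ginv a = b"
proof -
  assume h: "a \<in> G" "b \<in> G" "op a b = ee"
  have "b = op (op (ginv a) a) b" using h inv_props lid comm by metis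
  also have "\<dots> = op (ginv a) (op a b)" using assoc h inv_props by metis
  also have "\<dots> = ginv a" using h inv_props rid by simp
  finally show ?thesis by simp
qed

lemma invG: "a \<in> G \<Longrightarrow> ginv a \<in> G" using inv_props by blast
lemma inv_inv: "a \<in> G \<Longrightarrow> ginv (ginv a) = a"
  using inv_uniq inv_props comm invG by metis

lemma inv_mult: assumes "a \<in> G" "b \<in> G" shows "ginv (op a b) = op (ginv a) (ginv b)"
proof (rule inv_uniq)
  show "op a b \<in> G" "op (ginv a) (ginv b) \<in> G" using assms cl invG by auto
  have "op (op a b) (op (ginv a) (ginv b)) = op a (op b (op (ginv a) (ginv b)))"
    using assms assoc cl invG by metis
  also have "op b (op (ginv a) (ginv b)) = op (ginv a) (op b (ginv b))"
    using assms assoc comm invG by metis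
  also have "\<dots> = ginv a" using assms inv_props rid by simp
  finally show "op (op a b) (op (ginv a) (ginv b)) = ee" using assms inv_props by simp
qed

lemma inv_anti: assumes "a \<in> G" "b \<in> G" "a \<le> b" shows "ginv b \<le> ginv a"
proof -
  have "op a (op (ginv a) (ginv b)) \<le> op b (op (ginv a) (ginv b))"
    using mono1 assms cl invG by blast
  moreover have "op a (op (ginv a) (ginv b)) = ginv b"
    using assms assoc inv_props lid invG by metis
  moreover have "op b (op (ginv a) (ginv b)) = ginv a"
    using assms assoc inv_props rid comm invG by metis
  ultimately show ?thesis by simp
qed

lemma gnorm_ge: "a \<in> G \<Longrightarrow> ee \<le> gnorm G op a"
proof -
  assume a: "a \<in> G"
  show ?thesis
  proof (cases "ee \<le> a")
    case True then show ?thesis unfolding gnorm_def by simp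
  next
    case False
    then have "ginv ee \<le> ginv a" using inv_anti a eG by simp
    moreover have "ginv ee = ee" using inv_uniq eG lid by metis
    ultimately show ?thesis unfolding gnorm_def by simp
  qed
qed

lemma gnorm_G: "a \<in> G \<Longrightarrow> gnorm G op a \<in> G"
  unfolding gnorm_def max_def using invG by auto

lemma gnorm_e: assumes "a \<in> G" "gnorm G op a = ee" shows "a = ee"
proof -
  have "a \<le> ee" "ginv a \<le> ee" using assms unfolding gnorm_def by auto
  then have "ginv ee \<le> ginv (ginv a)" using inv_anti assms invG eG by blast
  moreover have "ginv ee = ee" using inv_uniq eG lid by metis
  ultimately have "ee \<le> a" using inv_inv assms by simp
  then show ?thesis using \<open>a \<le> ee\<close> by simp
qed

lemma gnorm_inv: "a \<in> G \<Longrightarrow> gnorm G op (ginv a) = gnorm G op a"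
  unfolding gnorm_def using inv_inv by (simp add: max.commute)

lemma gnorm_mult: assumes "a \<in> G" "b \<in> G"
  shows "gnorm G op (op a b) \<le> op (gnorm G op a) (gnorm G op b)"
proof -
  have na: "a \<le> gnorm G op a" "ginv a \<le> gnorm G op a" unfolding gnorm_def by auto
  have nb: "b \<le> gnorm G op b" "ginv b \<le> gnorm G op b" unfolding gnorm_def by auto
  have g: "gnorm G op a \<in> G" "gnorm G op b \<in> G" using gnorm_G assms by auto
  have "op a b \<le> op (gnorm G op a) b" using mono1 assms g na by blast
  also have "\<dots> \<le> op (gnorm G op a) (gnorm G op b)" using mono2 assms g nb by blast
  finally have 1: "op a b \<le> op (gnorm G op a) (gnorm G op b)" .
  have "ginv (op a b) = op (ginv a) (ginv b)" using inv_mult assms by simp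
  also have "\<dots> \<le> op (gnorm G op a) (ginv b)" using mono1 assms g na invG by blast
  also have "\<dots> \<le> op (gnorm G op a) (gnorm G op b)" using mono2 assms g nb invG by blast
  finally show ?thesis using 1 unfolding gnorm_def by simp
qed

end

theorem proposition6:
  fixes G :: "real set" and op :: "real \<Rightarrow> real \<Rightarrow> real"
    and am ap bm bp :: real
  assumes alo: "real_alo_group G op"
    and cont: "continuous_on (G \<times> G) (\<lambda>(x, y). op x y)"
    and G_open_interval: "open G" "is_interval G" "G \<noteq> {}"
    and a: "am \<in> G" "ap \<in> G" "am \<le> ap"
    and b: "bm \<in> G" "bp \<in> G" "bm \<le> bp"
  shows "ivnorm G op {am..ap} = ivnorm G op (iv_inv G op am ap)
    \<and> am \<le> ivnorm G op {am..ap} \<and> ap \<le> ivnorm G op {am..ap}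
    \<and> ivnorm G op {am..ap} \<ge> alo_id G op
    \<and> (ivnorm G op {am..ap} = alo_id G op \<longleftrightarrow> am = alo_id G op \<and> ap = alo_id G op)
    \<and> ivnorm G op (iv_mult op {am..ap} {bm..bp})
        \<le> op (ivnorm G op {am..ap}) (ivnorm G op {bm..bp})"
proof -
  interpret ralo G op by (rule ralo.intro[OF alo])
  have IA: "ivnorm G op {am..ap} = max (gnorm G op am) (gnorm G op ap)"
    unfolding ivnorm_def using a by simp
  have IB: "ivnorm G op {bm..bp} = max (gnorm G op bm) (gnorm G op bp)"
    unfolding ivnorm_def using b by simp
  have sA: "{am..ap} \<subseteq> G" using G_open_interval(2) a
    by (meson atLeastAtMost_iff mem_is_interval_1_I subsetI)
  have sB: "{bm..bp} \<subseteq> G" using G_open_interval(2) b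
    by (meson atLeastAtMost_iff mem_is_interval_1_I subsetI)
  have p1: "ivnorm G op {am..ap} = ivnorm G op (iv_inv G op am ap)"
  proof -
    have "ginv ap \<le> ginv am" using inv_anti a by blast
    then show ?thesis unfolding iv_inv_def ivnorm_def using a gnorm_inv
      by (simp add: max.commute)
  qed
  have p2: "am \<le> ivnorm G op {am..ap}" "ap \<le> ivnorm G op {am..ap}"
    unfolding IA gnorm_def by auto
  have p3: "ivnorm G op {am..ap} \<ge> ee" unfolding IA using gnorm_ge a by (simp add: le_max_iff_disj)
  have p4: "ivnorm G op {am..ap} = ee \<longleftrightarrow> am = ee \<and> ap = ee"
  proof
    assume h: "ivnorm G op {am..ap} = ee"
    have "gnorm G op am = ee" "gnorm G op ap = ee"
      using h gnorm_ge a unfolding IA by (metis antisym max.cobounded1 max.cobounded2)+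
    then show "am = ee \<and> ap = ee" using gnorm_e a by blast
  next
    assume "am = ee \<and> ap = ee"
    moreover have "ginv ee = ee" using inv_uniq eG lid by metis
    ultimately show "ivnorm G op {am..ap} = ee" unfolding IA gnorm_def by simp
  qed
  let ?M = "iv_mult op {am..ap} {bm..bp}"
  have lo: "\<And>x. x \<in> ?M \<Longrightarrow> op am bm \<le> x \<and> x \<le> op ap bp"
  proof -
    fix x assume "x \<in> ?M"
    then obtain u v where uv: "x = op u v" "u \<in> {am..ap}" "v \<in> {bm..bp}"
      unfolding iv_mult_def by blast
    have G: "u \<in> G" "v \<in> G" using uv sA sB by auto
    have "op am bm \<le> op u bm" using mono1 a b G uv by auto
    also have "\<dots> \<le> op u v" using mono2 a b G uv by auto
    finally have 1: "op am bm \<le> x" using uv by simp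
    have "op u v \<le> op ap v" using mono1 a b G uv by auto
    also have "\<dots> \<le> op ap bp" using mono2 a b G uv by auto
    finally show "op am bm \<le> x \<and> x \<le> op ap bp" using 1 uv by simp
  qed
  have inM: "op am bm \<in> ?M" "op ap bp \<in> ?M" unfolding iv_mult_def using a b by auto
  have infM: "Inf ?M = op am bm"
    by (rule cInf_eq_minimum[OF inM(1)]) (use lo in blast)
  have supM: "Sup ?M = op ap bp"
    by (rule cSup_eq_maximum[OF inM(2)]) (use lo in blast)
  have gA: "gnorm G op am \<in> G" "gnorm G op ap \<in> G" "gnorm G op bm \<in> G" "gnorm G op bp \<in> G"
    using gnorm_G a b by auto
  have NA: "ivnorm G op {am..ap} \<in> G" "ivnorm G op {bm..bp} \<in> G"
    unfolding IA IB max_def using gA by auto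
  have key: "\<And>x y. x \<in> G \<Longrightarrow> y \<in> G \<Longrightarrow> gnorm G op x \<le> ivnorm G op {am..ap} \<Longrightarrow>
      gnorm G op y \<le> ivnorm G op {bm..bp} \<Longrightarrow>
      gnorm G op (op x y) \<le> op (ivnorm G op {am..ap}) (ivnorm G op {bm..bp})"
  proof -
    fix x y assume h: "x \<in> G" "y \<in> G" "gnorm G op x \<le> ivnorm G op {am..ap}"
      "gnorm G op y \<le> ivnorm G op {bm..bp}"
    have "gnorm G op (op x y) \<le> op (gnorm G op x) (gnorm G op y)" using gnorm_mult h by simp
    also have "\<dots> \<le> op (ivnorm G op {am..ap}) (gnorm G op y)"
      using mono1 h gnorm_G NA by blast
    also have "\<dots> \<le> op (ivnorm G op {am..ap}) (ivnorm G op {bm..bp})"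
      using mono2 h gnorm_G NA by blast
    finally show "gnorm G op (op x y) \<le> op (ivnorm G op {am..ap}) (ivnorm G op {bm..bp})" .
  qed
  have p5: "ivnorm G op ?M \<le> op (ivnorm G op {am..ap}) (ivnorm G op {bm..bp})"
    unfolding ivnorm_def[of G op ?M] infM supM
    using key[of am bm] key[of ap bp] a b unfolding IA IB by simp
  show ?thesis using p1 p2 p3 p4 p5 by blast
qed

end
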